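(* Let $2<p<4$ and $\nu<0$. Then for every $\lambda\ge\max\{1,4\nu^2\}$, $\|\mathcal{G}_{\lambda,\nu}\|_p^p\le\frac{\widetilde C_p}{\lambda^{p/4}}$, with $\widetilde C_p=\frac{\pi^{1-p}}{p^{p/2}}\Big[\frac{4^p}{p^{\frac{4-p}{p}}}+\Big(\frac{2p}{4-p}\Big)^{\frac{3p-4}{2}}e^{-\frac{4-p}{2}}\Big(\frac2p+\frac1e\Big)\Big]$.
   Context: For $\lambda>0$ and $\nu>-\sqrt{\lambda}$, $\mathcal{G}_{\lambda,\nu}$ is the radial function on $\mathbb{R}^2\setminus\{0\}$ given by $\mathcal{G}_{\lambda,\nu}(x)=\frac{\Gamma(\frac12+\frac{\nu}{2\sqrt\lambda})}{2\pi}e^{-\sqrt\lambda|x|}U_{\frac12+\frac{\nu}{2\sqrt\lambda},1}(2\sqrt\lambda|x|)$, with $U_{a,b}$ Tricomi's confluent hypergeometric function. $\|\cdot\|_r$ is the $L^r(\mathbb{R}^2)$ norm. *)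

theory Defs
  imports "HOL-Analysis.Analysis"
begin

text \<open>Tricomi's confluent hypergeometric function U(a,b,z), via its standard
integral representation (DLMF 13.4.4), valid for a > 0 and z > 0, which is the
only range used below.\<close>
definition tricomiU :: "real \<Rightarrow> real \<Rightarrow> real \<Rightarrow> real" where
  "tricomiU a b z = (1 / Gamma a) *
     (LBINT t:{0<..}. exp (- z * t) * t powr (a - 1) * (1 + t) powr (b - a - 1))"

text \<open>The radial function G_{lam,nu} on R^2 (value at 0 is irrelevant: null set).\<close>
definition Gfun :: "real \<Rightarrow> real \<Rightarrow> real^2 \<Rightarrow> real" where
  "Gfun lam nu x = Gamma (1/2 + nu / (2 * sqrt lam)) / (2 * pi)
     * exp (- sqrt lam * norm x)
     * tricomiU (1/2 + nu / (2 * sqrt lam)) 1 (2 * sqrt lam * norm x)"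

definition Ctilde :: "real \<Rightarrow> real" where
  "Ctilde p = pi powr (1 - p) / p powr (p / 2) *
     (4 powr p / p powr ((4 - p) / p)
      + (2 * p / (4 - p)) powr ((3 * p - 4) / 2) * exp (- (4 - p) / 2) * (2 / p + 1 / exp 1))"

end

theory Submission
  imports Defs "HOL-Analysis.Analysis"
begin

lemma gamma_int:
  fixes g k :: real
  assumes g: "g < 1" and k: "k > 0"
  shows "(\<integral>\<^sup>+t. ennreal (indicator {0..} t * t powr (-g) * exp (-k*t)) \<partial>lborel)
           = ennreal (Gamma (1-g) * k powr (g - 1))"
proof -
  define J where "J = (\<integral>\<^sup>+t. ennreal (indicator {0..} t * t powr (-g) * exp (-k*t)) \<partial>lborel)"
  have "ennreal (Gamma (1-g)) = (\<integral>\<^sup>+t. ennreal (indicator {0..} t * t powr ((1-g) - 1) / exp t) \<partial>lborel)"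
    using Gamma_conv_nn_integral_real[of "1-g"] g by simp
  also have "\<dots> = ennreal \<bar>k\<bar> * (\<integral>\<^sup>+t. ennreal (indicator {0..} (0 + k*t) * (0 + k*t) powr ((1-g) - 1) / exp (0 + k*t)) \<partial>lborel)"
    using k by (intro nn_integral_real_affine) auto
  also have "(\<lambda>t. ennreal (indicator {0..} (0 + k*t) * (0 + k*t) powr ((1-g) - 1) / exp (0 + k*t)))
      = (\<lambda>t. ennreal (k powr (-g)) * ennreal (indicator {0..} t * t powr (-g) * exp (-k*t)))"
  proof
    fix t
    show "ennreal (indicator {0..} (0 + k*t) * (0 + k*t) powr ((1-g) - 1) / exp (0 + k*t))
      = ennreal (k powr (-g)) * ennreal (indicator {0..} t * t powr (-g) * exp (-k*t))"
    proof (cases "t \<ge> 0")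
      case True
      then show ?thesis using k
        by (simp add: ennreal_mult'[symmetric] powr_mult exp_minus field_simps indicator_def)
    next
      case False
      then have "\<not> 0 \<le> k*t" using k by (simp add: zero_le_mult_iff)
      then show ?thesis using False by (simp add: indicator_def)
    qed
  qed
  also have "(\<integral>\<^sup>+t. ennreal (k powr (-g)) * ennreal (indicator {0..} t * t powr (-g) * exp (-k*t)) \<partial>lborel)
     = ennreal (k powr (-g)) * J"
    unfolding J_def by (rule nn_integral_cmult) auto
  finally have eq: "ennreal (Gamma (1-g)) = ennreal k * ennreal (k powr (-g)) * J"
    using k by (simp add: mult.assoc)
  have "ennreal k * ennreal (k powr (-g)) = ennreal (k powr (1-g))"
    using k by (simp add: ennreal_mult'[symmetric] powr_diff powr_minus field_simps)
  with eq have eq2: "ennreal (Gamma (1-g)) = ennreal (k powr (1-g)) * J" by simp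
  have "ennreal (k powr (g-1)) * ennreal (k powr (1-g)) = 1"
    using k by (simp add: ennreal_mult'[symmetric] powr_add[symmetric])
  then have "J = ennreal (k powr (g-1)) * ennreal (Gamma (1-g))"
    using eq2 by (metis mult.assoc mult_1)
  then show ?thesis unfolding J_def using g
    by (simp add: ennreal_mult'[symmetric] mult.commute)
qed

lemma Gamma_le1:
  fixes x :: real assumes "1 \<le> x" "x \<le> 2" shows "Gamma x \<le> 1"
proof -
  have "(ln \<circ> Gamma) ((1 - (x-1)) *\<^sub>R 1 + (x-1) *\<^sub>R 2) \<le> (1 - (x-1)) * (ln \<circ> Gamma) 1 + (x-1) * (ln \<circ> Gamma) (2::real)"
    using assms by (intro convex_onD[OF log_convex_Gamma_real]) auto
  moreover have "Gamma (2::real) = 1" using Gamma_fact[of 1] by simp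
  ultimately have "ln (Gamma x) \<le> 0" by (simp add: algebra_simps)
  moreover have "Gamma x > 0" using assms by simp
  ultimately show ?thesis by simp
qed

lemma Gamma_5_4: "Gamma (5/4::real) \<le> sqrt (sqrt pi / 2)"
proof -
  have "(ln \<circ> Gamma) ((1 - 1/2) *\<^sub>R 1 + (1/2) *\<^sub>R (3/2)) \<le> (1 - 1/2) * (ln \<circ> Gamma) 1 + (1/2) * (ln \<circ> Gamma) (3/2::real)"
    by (intro convex_onD[OF log_convex_Gamma_real]) auto
  moreover have "Gamma (3/2::real) = sqrt pi / 2"
  proof -
    have "(1/2::real) \<notin> \<int>\<^sub>\<le>\<^sub>0" using nonpos_Ints_nonpos by fastforce
    then show ?thesis using Gamma_plus1[of "1/2::real"] Gamma_one_half_real by simp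
  qed
  ultimately have "ln (Gamma (5/4::real)) \<le> ln (sqrt pi / 2) / 2" by simp
  then have "2 * ln (Gamma (5/4::real)) \<le> ln (sqrt pi / 2)" by simp
  then have "ln ((Gamma (5/4::real))^2) \<le> ln (sqrt pi / 2)"
    by (simp add: ln_realpow)
  moreover have g0: "Gamma (5/4::real) > 0" by (rule Gamma_real_pos) simp
  moreover have "(Gamma (5/4::real))^2 > 0" using g0 by (simp only: zero_less_power)
  ultimately have "(Gamma (5/4::real))^2 \<le> sqrt pi / 2"
    by (subst (asm) ln_le_cancel_iff) auto
  then show ?thesis using real_le_rsqrt by blast
qed


lemma pw_bound:
  fixes t a :: real
  assumes t: "t > 0" and a: "1/4 \<le> a" "a \<le> 1"
  shows "t powr (a - 1) * (1 + t) powr (1 - a - 1) \<le> t powr (-(3/4))"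
proof (cases "t \<le> 1")
  case True
  have "t powr (a - 1) \<le> t powr (-(3/4))"
    using True t a by (intro powr_mono') auto
  moreover have "(1 + t) powr (1 - a - 1) \<le> 1"
  proof -
    have "(1 + t) powr (1 - a - 1) \<le> (1 + t) powr 0" using t a by (intro powr_mono) auto
    then show ?thesis using t by simp
  qed
  ultimately show ?thesis using t
    by (metis mult_left_le mult_mono' powr_ge_zero order_trans mult.commute mult_1)
next
  case False
  have "(1 + t) powr (1 - a - 1) \<le> t powr (1 - a - 1)"
    using t a by (intro powr_mono2') auto
  then have "t powr (a - 1) * (1 + t) powr (1 - a - 1) \<le> t powr (a - 1) * t powr (1 - a - 1)"
    by (intro mult_left_mono) auto
  also have "\<dots> = t powr (-1)" using t by (simp add: powr_add[symmetric])
  also have "\<dots> \<le> t powr (-(3/4))" using False by (intro powr_mono) auto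
  finally show ?thesis .
qed

lemma inner_bound:
  fixes z a :: real
  assumes z: "z > 0" and a: "1/4 \<le> a" "a \<le> 1"
  shows "(LBINT t:{0<..}. exp (- z * t) * t powr (a - 1) * (1 + t) powr (1 - a - 1)) \<le> Gamma (1/4) * z powr (-1/4)"
proof -
  have "(\<integral>\<^sup>+t. ennreal (indicator {0<..} t *\<^sub>R (exp (- z * t) * t powr (a - 1) * (1 + t) powr (1 - a - 1))) \<partial>lborel)
     \<le> (\<integral>\<^sup>+t. ennreal (indicator {0..} t * t powr (-(3/4)) * exp (-z*t)) \<partial>lborel)"
  proof (intro nn_integral_mono)
    fix t :: real
    show "ennreal (indicator {0<..} t *\<^sub>R (exp (- z * t) * t powr (a - 1) * (1 + t) powr (1 - a - 1)))
        \<le> ennreal (indicator {0..} t * t powr (-(3/4)) * exp (-z*t))"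
    proof (cases "t > 0")
      case True
      have "exp (- z * t) * (t powr (a - 1) * (1 + t) powr (1 - a - 1)) \<le> exp (- z * t) * t powr (-(3/4))"
        using pw_bound[OF True a] by (intro mult_left_mono) auto
      then show ?thesis using True by (intro ennreal_leI) (simp add: indicator_def mult_ac)
    next
      case False
      then show ?thesis by (simp add: indicator_def)
    qed
  qed
  also have "\<dots> = ennreal (Gamma (1 - 3/4) * z powr (3/4 - 1))"
    using z by (intro gamma_int) auto
  finally have *: "(\<integral>\<^sup>+t. ennreal (indicator {0<..} t *\<^sub>R (exp (- z * t) * t powr (a - 1) * (1 + t) powr (1 - a - 1))) \<partial>lborel)
     \<le> ennreal (Gamma (1/4) * z powr (-1/4))" by simp
  show ?thesis unfolding set_lebesgue_integral_def
    by (rule integral_real_bounded[OF _ *]) (simp add: Gamma_real_pos less_imp_le)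
qed

lemma inner_nonneg:
  shows "(LBINT t:{0<..}. exp (- z * t) * t powr (a - 1) * (1 + t) powr (1 - a - 1)) \<ge> (0::real)"
  unfolding set_lebesgue_integral_def
  by (intro integral_nonneg_AE) (auto simp: indicator_def)


lemma G_bound:
  fixes lam nu :: real and x :: "real^2"
  assumes nu: "nu < 0" and lam: "lam \<ge> max 1 (4 * nu\<^sup>2)" and x: "x \<noteq> 0"
  shows "\<bar>Gfun lam nu x\<bar> \<le> Gamma (1/4) / (2*pi) * (2 * sqrt lam * norm x) powr (-1/4) * exp (- sqrt lam * norm x)"
proof -
  define s where "s = sqrt lam"
  define a where "a = 1/2 + nu / (2 * sqrt lam)"
  define L where "L = (LBINT t:{0<..}. exp (- (2 * sqrt lam * norm x) * t) * t powr (a - 1) * (1 + t) powr (1 - a - 1))"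
  have s1: "s \<ge> 1" using lam by (simp add: s_def)
  have "s \<ge> sqrt (4 * nu\<^sup>2)" using lam by (simp add: s_def)
  also have "sqrt (4 * nu\<^sup>2) = 2 * (- nu)" using nu by (simp add: real_sqrt_mult)
  finally have s2: "2 * (-nu) \<le> s" .
  have a1: "1/4 \<le> a" unfolding a_def s_def[symmetric] using s1 s2 by (simp add: field_simps)
  have a2: "a \<le> 1" unfolding a_def s_def[symmetric] using s1 nu by (simp add: field_simps)
  have ga: "Gamma a > 0" using a1 by (intro Gamma_real_pos) simp
  have z: "2 * sqrt lam * norm x > 0" using x s1 by (simp add: s_def[symmetric])
  have G: "Gfun lam nu x = exp (- sqrt lam * norm x) * L / (2*pi)"
    unfolding Gfun_def tricomiU_def L_def a_def[symmetric] using ga by simp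
  have L0: "L \<ge> 0" unfolding L_def by (rule inner_nonneg)
  have L1: "L \<le> Gamma (1/4) * (2 * sqrt lam * norm x) powr (-1/4)"
    unfolding L_def by (rule inner_bound[OF z a1 a2])
  have "\<bar>Gfun lam nu x\<bar> = exp (- sqrt lam * norm x) * L / (2*pi)" using G L0 by simp
  also have "\<dots> \<le> exp (- sqrt lam * norm x) * (Gamma (1/4) * (2 * sqrt lam * norm x) powr (-1/4)) / (2*pi)"
    using L1 by (intro divide_right_mono mult_left_mono) auto
  finally show ?thesis by (simp add: field_simps)
qed



lemma Basis2: "(Basis::(real^2) set) = {axis 1 1, axis 2 1}"
  by (auto simp: Basis_vec_def UNIV_2)
lemma axis12: "axis 1 (1::real) \<noteq> (axis 2 1 :: real^2)"
  by (simp add: axis_eq_axis)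
lemma prod_Basis2: "(\<Prod>b\<in>(Basis::(real^2) set). f (x \<bullet> b)) = f (x$1) * (f (x$2)::'a::comm_monoid_mult)"
  by (simp add: Basis2 axis12 inner_axis)
lemma norm2: "norm (x::real^2) = sqrt ((x$1)^2 + (x$2)^2)"
  by (simp add: norm_vec_def L2_set_def sum_2)

lemma sym_int:
  fixes g k :: real
  assumes g: "g < 1" and k: "k > 0"
  shows "(\<integral>\<^sup>+u. ennreal (\<bar>u\<bar> powr (-g) * exp (-k * \<bar>u\<bar>)) \<partial>lborel) = ennreal (2 * (Gamma (1-g) * k powr (g-1)))"
proof -
  define f where "f = (\<lambda>t::real. ennreal (indicator {0..} t * t powr (-g) * exp (-k*t)))"
  have fm: "f \<in> borel_measurable borel" unfolding f_def by measurable
  have pt: "ennreal (\<bar>u\<bar> powr (-g) * exp (-k * \<bar>u\<bar>)) = f u + f (0 + (-1) * u)" for u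
  proof (cases "u > 0")
    case True then show ?thesis by (simp add: f_def indicator_def)
  next
    case False
    show ?thesis
    proof (cases "u = 0")
      case True then show ?thesis by (simp add: f_def indicator_def)
    next
      case False
      with \<open>\<not> u > 0\<close> have "u < 0" by simp
      then show ?thesis by (simp add: f_def indicator_def)
    qed
  qed
  have "(\<integral>\<^sup>+u. ennreal (\<bar>u\<bar> powr (-g) * exp (-k * \<bar>u\<bar>)) \<partial>lborel)
      = (\<integral>\<^sup>+u. f u + f (0 + (-1) * u) \<partial>lborel)" by (simp only: pt)
  also have "\<dots> = (\<integral>\<^sup>+u. f u \<partial>lborel) + (\<integral>\<^sup>+u. f (0 + (-1) * u) \<partial>lborel)"
    using fm by (intro nn_integral_add) auto
  also have "(\<integral>\<^sup>+u. f (0 + (-1) * u) \<partial>lborel) = (\<integral>\<^sup>+u. f u \<partial>lborel)"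
    using nn_integral_real_affine[OF fm, of "-1" 0] by simp
  also have "(\<integral>\<^sup>+u. f u \<partial>lborel) = ennreal (Gamma (1-g) * k powr (g - 1))"
    unfolding f_def by (rule gamma_int[OF g k])
  finally show ?thesis
    using g by (simp add: ennreal_plus[symmetric] Gamma_real_pos less_imp_le del: ennreal_plus)
qed

lemma prod_int:
  fixes g k :: real
  assumes g: "g < 1" and k: "k > 0"
  defines "h \<equiv> (\<lambda>u::real. if u = 0 then \<infinity> else ennreal (\<bar>u\<bar> powr (-g) * exp (-k * \<bar>u\<bar>)))"
  shows "(\<integral>\<^sup>+x. h (x$1) * h (x$2) \<partial>(lborel :: (real^2) measure)) = ennreal ((2 * (Gamma (1-g) * k powr (g-1)))^2)"
proof -
  have hm: "h \<in> borel_measurable borel" unfolding h_def by measurable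
  have "(\<integral>\<^sup>+x. h (x$1) * h (x$2) \<partial>(lborel :: (real^2) measure))
      = (\<integral>\<^sup>+x. (\<Prod>b\<in>Basis. (\<lambda>_. h) b (x \<bullet> b)) \<partial>(lborel :: (real^2) measure))"
    by (simp add: prod_Basis2)
  also have "\<dots> = (\<Prod>b\<in>(Basis::(real^2) set). (\<integral>\<^sup>+x. h x \<partial>lborel))"
    using hm by (subst nn_integral_lborel_prod) auto
  also have "(\<integral>\<^sup>+x. h x \<partial>lborel) = (\<integral>\<^sup>+u. ennreal (\<bar>u\<bar> powr (-g) * exp (-k * \<bar>u\<bar>)) \<partial>lborel)"
    using AE_lborel_singleton[of 0] by (intro nn_integral_cong_AE) (auto simp: h_def)
  also have "\<dots> = ennreal (2 * (Gamma (1-g) * k powr (g-1)))" by (rule sym_int[OF g k])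
  finally have *: "(\<integral>\<^sup>+x. h (x$1) * h (x$2) \<partial>(lborel :: (real^2) measure))
     = ennreal (2 * (Gamma (1-g) * k powr (g-1))) * ennreal (2 * (Gamma (1-g) * k powr (g-1)))"
    by (simp add: prod_Basis2[where f="\<lambda>_. ennreal (2 * (Gamma (1-g) * k powr (g-1)))", simplified])
  have nn: "0 \<le> 2 * (Gamma (1-g) * k powr (g-1))" using g by (simp add: Gamma_real_pos less_imp_le)
  show ?thesis unfolding * power2_eq_square using nn by (metis ennreal_mult)
qed



lemma pt2D:
  fixes x :: "real^2" and p C s y :: real
  assumes p: "0 < p" and s: "s > 0" and C: "C > 0" and y0: "0 \<le> y"
    and bnd: "x \<noteq> 0 \<Longrightarrow> y \<le> C * (2 * s * norm x) powr (-1/4) * exp (- s * norm x)"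
  defines "h \<equiv> (\<lambda>u::real. if u = 0 then \<infinity> else ennreal (\<bar>u\<bar> powr (-(p/8)) * exp (-(p * s / sqrt 2) * \<bar>u\<bar>)))"
  shows "ennreal (y powr p) \<le> ennreal (C powr p * (2 * s) powr (-p/4) * 2 powr (-p/8)) * (h (x$1) * h (x$2))"
proof (cases "x$1 = 0 \<or> x$2 = 0")
  case True
  have hpos: "h u > 0" for u unfolding h_def by auto
  have H: "h (x$1) * h (x$2) = \<infinity>"
    using True hpos[of "x$1"] hpos[of "x$2"] unfolding h_def
    by (auto simp: ennreal_mult_eq_top_iff)
  have K: "C powr p * (2 * s) powr (-p/4) * 2 powr (-p/8) > 0" using C s by simp
  have "ennreal (C powr p * (2 * s) powr (-p/4) * 2 powr (-p/8)) * (h (x$1) * h (x$2)) = \<infinity>"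
    unfolding H using K C s by (simp add: ennreal_mult_top)
  then show ?thesis by simp
next
  case False
  define a where "a = \<bar>x$1\<bar>"
  define b where "b = \<bar>x$2\<bar>"
  define r where "r = norm x"
  define k where "k = p * s / sqrt 2"
  have a: "a > 0" and b: "b > 0" using False by (auto simp: a_def b_def)
  have r: "r = sqrt (a^2 + b^2)" unfolding r_def a_def b_def by (simp add: norm2)
  have r0: "r > 0" using r a by (simp add: add_pos_nonneg)
  have x0: "x \<noteq> 0" using False by auto
  have "y powr p \<le> (C * (2 * s * r) powr (-1/4) * exp (- s * r)) powr p"
    using bnd[OF x0] y0 p unfolding r_def by (intro powr_mono2) auto
  also have "\<dots> = C powr p * (2 * s) powr (-p/4) * r powr (-p/4) * exp (- (p * s * r))"
    using C s r0 by (simp add: powr_mult powr_powr exp_powr_real mult_ac)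
  also have "r powr (-p/4) \<le> 2 powr (-p/8) * (a powr (-(p/8)) * b powr (-(p/8)))"
  proof -
    have "r powr (-p/4) = (a^2 + b^2) powr (-(p/8))"
      using a b by (simp add: r powr_half_sqrt[symmetric] powr_powr)
    also have "\<dots> \<le> (2 * a * b) powr (-(p/8))"
    proof (rule powr_mono2')
      show "2 * a * b \<le> a^2 + b^2" using sum_squares_bound[of a b] by simp
    qed (use p a b in auto)
    also have "\<dots> = 2 powr (-p/8) * (a powr (-(p/8)) * b powr (-(p/8)))"
      using a b by (simp add: powr_mult)
    finally show ?thesis .
  qed
  also have "exp (- (p * s * r)) \<le> exp (- k * a) * exp (- k * b)"
  proof -
    have "(a + b)^2 \<le> 2 * (a^2 + b^2)" using sum_squares_bound[of a b] by (simp add: power2_eq_square algebra_simps)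
    then have "a + b \<le> sqrt 2 * r" unfolding r using a b
      by (metis real_le_rsqrt real_sqrt_mult add_pos_pos less_imp_le)
    then have "k * (a + b) \<le> k * (sqrt 2 * r)" unfolding k_def using p s
      by (intro mult_left_mono) auto
    also have "k * (sqrt 2 * r) = p * s * r" unfolding k_def by simp
    finally have "k * (a + b) \<le> p * s * r" .
    then show ?thesis by (simp add: exp_add[symmetric] algebra_simps)
  qed
  finally have "y powr p \<le> (C powr p * (2 * s) powr (-p/4) * 2 powr (-p/8))
       * ((a powr (-(p/8)) * exp (- k * a)) * (b powr (-(p/8)) * exp (- k * b)))"
    using C s by (simp add: mult_left_mono mult_right_mono mult_ac)
  moreover have "h (x$1) * h (x$2) = ennreal (a powr (-(p/8)) * exp (- k * a)) * ennreal (b powr (-(p/8)) * exp (- k * b))"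
    using False unfolding h_def a_def b_def k_def by simp
  ultimately show ?thesis
    using C s by (simp add: ennreal_mult'[symmetric] ennreal_leI)
qed


lemma gen_lin:
  fixes A B D E P Q l q C pq :: real
  assumes "A \<le> 2 * C" "(3/4) * D - (3/2) * B \<le> (3/2) * P - 3 * l"
       "E \<le> 3/2" "13/2 * l \<le> 3/2 * P + 2 * Q" "3 \<le> 3 * l + q" "4 * C = q - 2 * l"
  shows "A + 1/2 * B + 1/4 * D - pq + 9 * l - 2 * Q - 2 * P \<le> q - pq - 1/2 * D + 2 * B - E + P"
  using assms by linarith

lemma num_core:
  fixes p c :: real
  assumes p: "2 < p" "p < 4" and c: "c = sqrt (sqrt pi / 2)"
  shows "(2*c/pi) powr p * 2 powr (-p/4) * 2 powr (-p/8) * (2 * (8/(8-p)) * (p / sqrt 2) powr (p/8 - 1))^2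
     \<le> pi powr (1 - p) / p powr (p / 2) * (4 powr p / p powr ((4 - p) / p))"
proof -
  have c0: "c > 0" using c by simp
  have "sqrt pi < sqrt 4" using pi_less_4 by (simp only: real_sqrt_less_iff)
  then have sp: "sqrt pi < 2" by simp
  have c1: "c < 1" using c sp by simp
  have lnc: "ln c \<le> 0" using c0 c1 by simp
  have lnc2: "4 * ln c = ln pi - 2 * ln 2" using c
    by (simp add: ln_sqrt ln_div)
  have F1: "p * ln c \<le> 2 * ln c" using lnc p by (intro mult_right_mono_neg) auto
  have lnp4: "ln p - 2 * ln 2 \<le> 0" 
  proof -
    have "ln p \<le> ln 4" using p by simp
    also have "ln (4::real) = 2 * ln 2" using ln_realpow[of 2 2] by simp
    finally show ?thesis by simp
  qed
  have F2: "(3*p/4) * (ln p - 2 * ln 2) \<le> (3/2) * (ln p - 2 * ln 2)"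
    using lnp4 p by (intro mult_right_mono_neg) auto
  have e83: "exp 1 \<ge> (8/3::real)"
  proof -
    have "(31/30::real)^30 \<le> exp (1/30) ^ 30"
      by (intro power_mono) (use exp_ge_add_one_self[of "1/30::real"] in auto)
    also have "\<dots> = exp 1" by (simp flip: exp_of_nat_mult)
    finally have "(31/30::real)^30 \<le> exp 1" .
    moreover have "(8/3::real) \<le> (31/30)^30" by (simp add: power_divide)
    ultimately show ?thesis by linarith
  qed
  have F3: "(4/p) * ln p \<le> 3/2"
  proof -
    have "ln (3*p/8) \<le> 3*p/8 - 1" using p by (intro ln_le_minus_one) auto
    moreover have "ln (3*p/8) = ln p - ln (8/3)" using p by (simp add: ln_div ln_mult)
    moreover have "ln (8/3::real) \<le> 1"
    proof -
      have "ln (8/3::real) \<le> ln (exp 1)" using e83 by (subst ln_le_cancel_iff) auto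
      then show ?thesis by simp
    qed
    ultimately have "ln p \<le> 3*p/8" by simp
    then show ?thesis using p by (simp add: field_simps)
  qed
  have F4: "(3/2) * ln p + 2 * ln (8-p) \<ge> (13/2) * ln 2"
  proof -
    have h1: "(p-2)*(p-10) \<le> 0" using p by (intro mult_nonneg_nonpos) auto
    have h2: "0 \<le> (4-p)*(-(p^2-12*p+16))"
      using p h1 by (intro mult_nonneg_nonneg) (auto simp: algebra_simps power2_eq_square)
    have "p*(8-p)^2 - 64 = (4-p)*(-(p^2-12*p+16))" by (simp add: algebra_simps power2_eq_square)
    then have poly: "p * (8-p)^2 \<ge> 64" using h2 by linarith
    have "sqrt 2 * 64 \<le> sqrt p * (p * (8-p)^2)"
      using p poly by (intro mult_mono) auto
    then have "ln (sqrt 2 * 64) \<le> ln (sqrt p * (p * (8-p)^2))" using p by simp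
    moreover have "ln (sqrt 2 * 64) = (13/2) * ln (2::real)"
    proof -
      have "ln (64::real) = 6 * ln 2" using ln_realpow[of 2 6] by simp
      then show ?thesis by (simp add: ln_mult ln_sqrt)
    qed
    moreover have "ln (sqrt p * (p * (8-p)^2)) = (3/2) * ln p + 2 * ln (8-p)"
      using p by (simp add: ln_mult ln_sqrt ln_realpow)
    ultimately show ?thesis by simp
  qed
  have F5: "3 \<le> 3 * ln 2 + ln pi"
  proof -
    have "exp 1 ^ 3 \<le> (272/100::real)^3" using e_less_272 by (intro power_mono) auto
    also have "\<dots> \<le> 24" by (simp add: power_divide)
    also have "\<dots> \<le> 8 * pi" using pi_gt3 by simp
    finally have "ln (exp 1 ^ 3) \<le> ln (8 * pi)" by simp
    moreover have "ln (8::real) = 3 * ln 2" using ln_realpow[of 2 3] by simp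
    ultimately show ?thesis by (simp add: ln_realpow ln_mult)
  qed
  have pos1: "(2*c/pi) powr p * 2 powr (-p/4) * 2 powr (-p/8) * (2 * (8/(8-p)) * (p / sqrt 2) powr (p/8 - 1))^2 > 0"
    using c0 p by simp
  have pos2: "pi powr (1 - p) / p powr (p / 2) * (4 powr p / p powr ((4 - p) / p)) > 0"
    using p by simp
  have "ln ((2*c/pi) powr p * 2 powr (-p/4) * 2 powr (-p/8) * (2 * (8/(8-p)) * (p / sqrt 2) powr (p/8 - 1))^2)
     \<le> ln (pi powr (1 - p) / p powr (p / 2) * (4 powr p / p powr ((4 - p) / p)))"
  proof -
    have l16: "ln (16::real) = 4 * ln 2" using ln_realpow[of 2 4] by simp
    have l4: "ln (4::real) = 2 * ln 2" using ln_realpow[of 2 2] by simp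
    have L: "ln ((2*c/pi) powr p * 2 powr (-p/4) * 2 powr (-p/8) * (2 * (8/(8-p)) * (p / sqrt 2) powr (p/8 - 1))^2)
      = p * (ln 2 + ln c - ln pi) - p/4 * ln 2 - p/8 * ln 2 + 2 * (ln 2 + 3 * ln 2 - ln (8-p) + (p/8 - 1) * (ln p - ln 2 / 2))"
      using c0 p l16 by (simp add: ln_mult ln_div ln_realpow ln_sqrt)
    have R: "ln (pi powr (1 - p) / p powr (p / 2) * (4 powr p / p powr ((4 - p) / p)))
      = (1 - p) * ln pi - p/2 * ln p + p * (2 * ln 2) - ((4-p)/p) * ln p"
      using p l4 by (simp add: ln_mult ln_div)
    have e4p: "((4-p)/p) * ln p = (4/p) * ln p - ln p" using p by (simp add: field_simps)
    have X: "p * (ln 2 + ln c - ln pi) - p/4 * ln 2 - p/8 * ln 2 + 2 * (ln 2 + 3 * ln 2 - ln (8-p) + (p/8 - 1) * (ln p - ln 2 / 2))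
      = p * ln c + (1/2) * (p * ln 2) + (1/4) * (p * ln p) - p * ln pi + 9 * ln 2 - 2 * ln (8-p) - 2 * ln p"
      by (simp add: algebra_simps)
    have Y: "(1 - p) * ln pi - p/2 * ln p + p * (2 * ln 2) - ((4-p)/p) * ln p
      = ln pi - p * ln pi - (1/2) * (p * ln p) + 2 * (p * ln 2) - (4/p) * ln p + ln p"
      using e4p by (simp add: algebra_simps)
    have F2': "(3/4) * (p * ln p) - (3/2) * (p * ln 2) \<le> (3/2) * ln p - 3 * ln 2"
      using F2 by (simp add: algebra_simps)

    show ?thesis unfolding L R X Y
      by (rule gen_lin[OF F1 F2' F3 F4 F5 lnc2])
  qed
  then show ?thesis using pos1 pos2 by simp
qed



lemma Gamma_quarter: "Gamma (1/4::real) \<le> 4 * sqrt (sqrt pi / 2)"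
proof -
  have "(1/4::real) \<notin> \<int>\<^sub>\<le>\<^sub>0" using nonpos_Ints_nonpos by fastforce
  then have "Gamma (1/4 + 1::real) = 1/4 * Gamma (1/4)" using Gamma_plus1[of "1/4::real"] by simp
  then have "Gamma (1/4::real) = 4 * Gamma (5/4)" by simp
  then show ?thesis using Gamma_5_4 by simp
qed

lemma Gamma_small:
  fixes p :: real assumes "2 < p" "p < 4"
  shows "Gamma (1 - p/8) \<le> 8/(8-p)"
proof -
  have "(1 - p/8) \<notin> \<int>\<^sub>\<le>\<^sub>0" using nonpos_Ints_nonpos assms by fastforce
  then have "Gamma (1 - p/8 + 1) = (1 - p/8) * Gamma (1 - p/8)" using Gamma_plus1[of "1 - p/8"] by simp
  moreover have "Gamma (1 - p/8 + 1) \<le> 1" using assms by (intro Gamma_le1) auto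
  ultimately have "(1 - p/8) * Gamma (1 - p/8) \<le> 1" by simp
  then show ?thesis using assms by (simp add: field_simps)
qed

lemma Ct_ge:
  fixes p :: real assumes "2 < p" "p < 4"
  shows "pi powr (1 - p) / p powr (p / 2) * (4 powr p / p powr ((4 - p) / p)) \<le> Ctilde p"
  unfolding Ctilde_def using assms
  by (intro mult_left_mono) (auto intro!: mult_nonneg_nonneg add_nonneg_nonneg)

lemma final_real:
  fixes p lam s :: real
  assumes p: "2 < p" "p < 4" and lam: "lam \<ge> 1" and s: "s = sqrt lam"
  shows "(Gamma (1/4) / (2*pi)) powr p * (2 * s) powr (-p/4) * 2 powr (-p/8)
          * (2 * (Gamma (1 - p/8) * (p * s / sqrt 2) powr (p/8 - 1)))^2 \<le> Ctilde p / lam powr (p / 4)"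
proof -
  define C where "C = Gamma (1/4) / (2*pi)"
  define c where "c = sqrt (sqrt pi / 2)"
  define A where "A = (p / sqrt 2) powr (p/8 - 1)"
  define X where "X = C powr p * 2 powr (-p/4) * 2 powr (-p/8) * (2 * (Gamma (1 - p/8) * A))^2"
  have s0: "s > 0" using s lam by simp
  have C0: "C > 0" unfolding C_def by simp
  have A0: "A > 0" unfolding A_def using p by simp
  have G0: "Gamma (1 - p/8) > 0" using p by simp
  have e1: "(2 * s) powr (-p/4) = 2 powr (-p/4) * s powr (-p/4)" using s0 by (simp add: powr_mult)
  have e2: "(p * s / sqrt 2) powr (p/8 - 1) = A * s powr (p/8 - 1)"
    unfolding A_def using s0 p by (simp add: powr_mult[symmetric] mult_ac)
  have e3: "(s powr (p/8 - 1))^2 = s powr (p/4 - 2)"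
    using s0 by (simp add: power2_eq_square powr_add[symmetric])
  have e4: "s powr (-p/4) * s powr (p/4 - 2) = 1 / lam"
  proof -
    have "s powr (-p/4) * s powr (p/4 - 2) = s powr (-2)" using s0 by (simp add: powr_add[symmetric])
    also have "\<dots> = 1 / s^2" using s0 by (simp add: powr_minus powr_realpow divide_inverse)
    also have "s^2 = lam" using s lam by simp
    finally show ?thesis .
  qed
  have LHS: "(Gamma (1/4) / (2*pi)) powr p * (2 * s) powr (-p/4) * 2 powr (-p/8)
          * (2 * (Gamma (1 - p/8) * (p * s / sqrt 2) powr (p/8 - 1)))^2 = X / lam"
  proof -
    have gen: "\<And>Cp T U V G A S :: real. Cp * (T * U) * V * (2 * (G * (A * S)))^2
        = (Cp * T * V * (2 * (G * A))^2) * (U * S^2)"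
      by (simp add: algebra_simps power2_eq_square)
    show ?thesis
      unfolding e1 e2 gen e3 e4 X_def C_def[symmetric] by simp
  qed
  have X1: "X \<le> (2*c/pi) powr p * 2 powr (-p/4) * 2 powr (-p/8) * (2 * (8/(8-p)) * (p / sqrt 2) powr (p/8 - 1))^2"
  proof -
    have "C \<le> 2*c/pi" unfolding C_def c_def using Gamma_quarter by (simp add: field_simps)
    then have "C powr p \<le> (2*c/pi) powr p" using C0 p by (intro powr_mono2) auto
    moreover have "(2 * (Gamma (1 - p/8) * A))^2 \<le> (2 * (8/(8-p)) * A)^2"
    proof (rule power_mono)
      have "Gamma (1 - p/8) * A \<le> (8/(8-p)) * A"
        using Gamma_small[OF p] A0 by (intro mult_right_mono) auto
      then show "2 * (Gamma (1 - p/8) * A) \<le> 2 * (8/(8-p)) * A" by simp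
    qed (use G0 A0 in simp)
    ultimately show ?thesis unfolding X_def A_def
      by (intro mult_mono) (auto intro!: mult_nonneg_nonneg)
  qed
  also have "\<dots> \<le> pi powr (1 - p) / p powr (p / 2) * (4 powr p / p powr ((4 - p) / p))"
    by (rule num_core[OF p c_def])
  also have "\<dots> \<le> Ctilde p" by (rule Ct_ge[OF p])
  finally have XC: "X \<le> Ctilde p" .
  have X0: "X \<ge> 0" unfolding X_def by simp
  have "lam powr (p/4) \<le> lam powr 1" using lam p by (intro powr_mono) auto
  then have lp: "lam powr (p/4) \<le> lam" using lam by simp
  have lp0: "lam powr (p/4) > 0" using lam by simp
  have "X / lam \<le> Ctilde p / lam" using XC lam by (intro divide_right_mono) auto
  also have "\<dots> \<le> Ctilde p / lam powr (p/4)"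
  proof (rule divide_left_mono)
    show "0 < lam * lam powr (p/4)" using lam lp0 by simp
  qed (use X0 XC lp in auto)
  finally show ?thesis unfolding LHS .
qed

theorem mainTheorem6:
  fixes p nu lam :: real
  assumes "2 < p" and "p < 4" and "nu < 0" and "lam \<ge> max 1 (4 * nu\<^sup>2)"
  shows "(\<integral>\<^sup>+ x. ennreal (\<bar>Gfun lam nu x\<bar> powr p) \<partial>lborel)
           \<le> ennreal (Ctilde p / lam powr (p / 4))"
proof -
  define s where "s = sqrt lam"
  define C where "C = Gamma (1/4) / (2*pi)"
  define k where "k = p * s / sqrt 2"
  define h where "h = (\<lambda>u::real. if u = 0 then \<infinity> else ennreal (\<bar>u\<bar> powr (-(p/8)) * exp (-(p * s / sqrt 2) * \<bar>u\<bar>)))"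
  define K0 where "K0 = C powr p * (2 * s) powr (-p/4) * 2 powr (-p/8)"
  have lam1: "lam \<ge> 1" using assms by simp
  have s0: "s > 0" using lam1 by (simp add: s_def)
  have C0: "C > 0" unfolding C_def by simp
  have k0: "k > 0" unfolding k_def using s0 assms by simp
  have pt: "ennreal (\<bar>Gfun lam nu x\<bar> powr p) \<le> ennreal K0 * (h (x$1) * h (x$2))" for x
    unfolding K0_def h_def
  proof (rule pt2D)
    show "x \<noteq> 0 \<Longrightarrow> \<bar>Gfun lam nu x\<bar> \<le> C * (2 * s * norm x) powr (-1/4) * exp (- s * norm x)"
      unfolding C_def s_def using G_bound[OF assms(3) assms(4)] by simp
  qed (use assms s0 C0 in auto)
  have hm: "h \<in> borel_measurable borel" unfolding h_def by measurable
  have hm2: "(\<lambda>x::real^2. h (x$1) * h (x$2)) \<in> borel_measurable borel"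
    using hm by measurable
  have "(\<integral>\<^sup>+ x. ennreal (\<bar>Gfun lam nu x\<bar> powr p) \<partial>lborel)
      \<le> (\<integral>\<^sup>+ x. ennreal K0 * (h (x$1) * h (x$2)) \<partial>(lborel :: (real^2) measure))"
    by (intro nn_integral_mono pt)
  also have "\<dots> = ennreal K0 * (\<integral>\<^sup>+ x. h (x$1) * h (x$2) \<partial>(lborel :: (real^2) measure))"
    using hm2 by (intro nn_integral_cmult) auto
  also have "(\<integral>\<^sup>+ x. h (x$1) * h (x$2) \<partial>(lborel :: (real^2) measure))
      = ennreal ((2 * (Gamma (1 - p/8) * k powr (p/8 - 1)))^2)"
    unfolding h_def k_def[symmetric] using assms k0 by (intro prod_int) auto
  also have "ennreal K0 * ennreal ((2 * (Gamma (1 - p/8) * k powr (p/8 - 1)))^2)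
      = ennreal (K0 * (2 * (Gamma (1 - p/8) * k powr (p/8 - 1)))^2)"
    unfolding K0_def using C0 s0 by (simp add: ennreal_mult)
  also have "\<dots> \<le> ennreal (Ctilde p / lam powr (p / 4))"
    unfolding K0_def C_def k_def
    using final_real[OF assms(1,2) lam1 s_def] by (intro ennreal_leI) simp
  finally show ?thesis .
qed

end
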